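(* Let $G$ be a finite group. If $G=H\,Z(G)$ for some subgroup $H$ of $G$, then $\mathcal{CD}(G)$ and $\mathcal{CD}(H)$ are isomorphic as lattices, and $\mathcal{CD}(G)=\{X Z(G)\mid X\in\mathcal{CD}(H)\}$.
   Context: For a finite group $G$ and $H\le G$, $m_G(H)=|H|\,|C_G(H)|$, $m^*(G)=\max\{m_G(H)\mid H\le G\}$, and the Chermak-Delgado lattice is $\mathcal{CD}(G)=\{H\le G\mid m_G(H)=m^*(G)\}$, a sublattice of the subgroup lattice of $G$. *)

theory Defs
  imports "HOL-Algebra.Algebra"
begin

definition centralizer :: "('a, 'b) monoid_scheme \<Rightarrow> 'a set \<Rightarrow> 'a set" where
  "centralizer G S = {g \<in> carrier G. \<forall>h\<in>S. g \<otimes>\<^bsub>G\<^esub> h = h \<otimes>\<^bsub>G\<^esub> g}"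

definition center :: "('a, 'b) monoid_scheme \<Rightarrow> 'a set" where
  "center G = centralizer G (carrier G)"

definition cd_measure :: "('a, 'b) monoid_scheme \<Rightarrow> 'a set \<Rightarrow> nat" where
  "cd_measure G S = card S * card (centralizer G S)"

definition cd_max :: "('a, 'b) monoid_scheme \<Rightarrow> nat" where
  "cd_max G = Max (cd_measure G ` {K. subgroup K G})"

definition CD :: "('a, 'b) monoid_scheme \<Rightarrow> 'a set set" where
  "CD G = {K. subgroup K G \<and> cd_measure G K = cd_max G}"

definition subgroup_lattice_iso ::
  "('a, 'b) monoid_scheme \<Rightarrow> ('c, 'd) monoid_scheme \<Rightarrow> 'a set set \<Rightarrow> 'c set set \<Rightarrow> ('a set \<Rightarrow> 'c set) \<Rightarrow> bool" where
  "subgroup_lattice_iso G1 G2 A B f \<longleftrightarrow>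
     bij_betw f A B \<and>
     (\<forall>U\<in>A. \<forall>V\<in>A. f (U \<inter> V) = f U \<inter> f V \<and>
        f (generate G1 (U \<union> V)) = generate G2 (f U \<union> f V))"

end

theory Submission
  imports Defs
begin

context group begin

lemma cancel1: "x \<in> carrier G \<Longrightarrow> y \<in> carrier G \<Longrightarrow> x \<otimes> (inv x \<otimes> y) = y"
  by (simp add: m_assoc[symmetric])
lemma cancel2: "x \<in> carrier G \<Longrightarrow> y \<in> carrier G \<Longrightarrow> inv x \<otimes> (x \<otimes> y) = y"
  by (simp add: m_assoc[symmetric])

lemma centralizer_sub: "centralizer G S \<subseteq> carrier G"
  unfolding centralizer_def by auto

lemma one_centralizer: "S \<subseteq> carrier G \<Longrightarrow> \<one> \<in> centralizer G S"
  unfolding centralizer_def by auto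

lemma centralizer_subgroup:
  assumes "S \<subseteq> carrier G" shows "subgroup (centralizer G S) G"
proof (rule subgroupI)
  show "centralizer G S \<subseteq> carrier G" by (rule centralizer_sub)
  show "centralizer G S \<noteq> {}" using one_centralizer[OF assms] by auto
next
  fix a assume a: "a \<in> centralizer G S"
  show "inv a \<in> centralizer G S"
    unfolding centralizer_def
  proof (safe)
    show "inv a \<in> carrier G" using a centralizer_sub by auto
  next
    fix h assume h: "h \<in> S"
    have ac: "a \<in> carrier G" and hc: "h \<in> carrier G" using a h assms centralizer_sub by auto
    have "a \<otimes> h = h \<otimes> a" using a h unfolding centralizer_def by auto
    have "inv a \<otimes> h = inv a \<otimes> (h \<otimes> a) \<otimes> inv a" using ac hc by (simp add: m_assoc)
    also have "\<dots> = inv a \<otimes> (a \<otimes> h) \<otimes> inv a" using \<open>a \<otimes> h = h \<otimes> a\<close> by simp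
    also have "\<dots> = h \<otimes> inv a" using ac hc by (simp add: cancel2)
    finally show "inv a \<otimes> h = h \<otimes> inv a" .
  qed
next
  fix a b assume a: "a \<in> centralizer G S" and b: "b \<in> centralizer G S"
  show "a \<otimes> b \<in> centralizer G S"
    unfolding centralizer_def
  proof (safe)
    show "a \<otimes> b \<in> carrier G" using a b centralizer_sub by auto
  next
    fix h assume h: "h \<in> S"
    have ac: "a \<in> carrier G" and bc: "b \<in> carrier G" and hc: "h \<in> carrier G"
      using a b h assms centralizer_sub by auto
    have 1: "a \<otimes> h = h \<otimes> a" and 2: "b \<otimes> h = h \<otimes> b" using a b h unfolding centralizer_def by auto
    have "a \<otimes> b \<otimes> h = a \<otimes> (h \<otimes> b)" using 2 ac bc hc by (simp add: m_assoc)
    also have "\<dots> = (a \<otimes> h) \<otimes> b" using ac bc hc by (simp add: m_assoc)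
    also have "\<dots> = h \<otimes> a \<otimes> b" using 1 by simp
    finally show "a \<otimes> b \<otimes> h = h \<otimes> (a \<otimes> b)" using ac bc hc by (simp add: m_assoc)
  qed
qed

lemma center_subgroup: "subgroup (center G) G"
  unfolding center_def by (rule centralizer_subgroup) simp

lemma center_comm: "z \<in> center G \<Longrightarrow> g \<in> carrier G \<Longrightarrow> z \<otimes> g = g \<otimes> z"
  unfolding center_def centralizer_def by auto

lemma center_carrier: "z \<in> center G \<Longrightarrow> z \<in> carrier G"
  unfolding center_def centralizer_def by auto

lemma center_sub_centralizer: "S \<subseteq> carrier G \<Longrightarrow> center G \<subseteq> centralizer G S"
  unfolding center_def centralizer_def by auto

lemma set_mult_center_subgroup:
  assumes K: "subgroup K G" shows "subgroup (K <#> center G) G"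
proof (rule subgroupI)
  have Kc: "K \<subseteq> carrier G" using K subgroup.subset by auto
  have Zc: "center G \<subseteq> carrier G" using center_carrier by auto
  show "K <#> center G \<subseteq> carrier G" using setmult_subset_G[OF Kc Zc] .
  show "K <#> center G \<noteq> {}" unfolding set_mult_def
    using subgroup.one_closed[OF K] subgroup.one_closed[OF center_subgroup] by blast
next
  fix a assume "a \<in> K <#> center G"
  then obtain k z where k: "k \<in> K" and z: "z \<in> center G" and a: "a = k \<otimes> z"
    unfolding set_mult_def by auto
  have kc: "k \<in> carrier G" using subgroup.mem_carrier[OF K k] by auto
  have zc: "z \<in> carrier G" using z center_carrier by auto
  have "inv a = inv z \<otimes> inv k" using a kc zc by (simp add: inv_mult_group)
  also have "\<dots> = inv k \<otimes> inv z" using center_comm[OF subgroup.m_inv_closed[OF center_subgroup z]] kc by simp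
  finally show "inv a \<in> K <#> center G" unfolding set_mult_def
    using subgroup.m_inv_closed[OF K k] subgroup.m_inv_closed[OF center_subgroup z] by blast
next
  fix a b assume "a \<in> K <#> center G" "b \<in> K <#> center G"
  then obtain k z k' z' where k: "k \<in> K" and z: "z \<in> center G" and a: "a = k \<otimes> z"
    and k': "k' \<in> K" and z': "z' \<in> center G" and b: "b = k' \<otimes> z'"
    unfolding set_mult_def by auto
  have kc: "k \<in> carrier G" "k' \<in> carrier G" using subgroup.mem_carrier[OF K k] subgroup.mem_carrier[OF K k'] by auto
  have zc: "z \<in> carrier G" "z' \<in> carrier G" using z z' center_carrier by auto
  have "a \<otimes> b = k \<otimes> (z \<otimes> k') \<otimes> z'" using a b kc zc by (simp add: m_assoc)
  also have "\<dots> = k \<otimes> (k' \<otimes> z) \<otimes> z'" using center_comm[OF z kc(2)] by simp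
  also have "\<dots> = (k \<otimes> k') \<otimes> (z \<otimes> z')" using kc zc by (simp add: m_assoc)
  finally show "a \<otimes> b \<in> K <#> center G" unfolding set_mult_def
    using subgroup.m_closed[OF K k k'] subgroup.m_closed[OF center_subgroup z z'] by blast
qed

lemma set_mult_one_right: "K \<subseteq> carrier G \<Longrightarrow> \<one> \<in> Z \<Longrightarrow> K \<subseteq> K <#> Z"
  unfolding set_mult_def by force

lemma centralizer_set_mult_center:
  assumes Kc: "K \<subseteq> carrier G"
  shows "centralizer G (K <#> center G) = centralizer G K"
proof
  show "centralizer G (K <#> center G) \<subseteq> centralizer G K"
    using set_mult_one_right[OF Kc subgroup.one_closed[OF center_subgroup]]
    unfolding centralizer_def by blast
next
  show "centralizer G K \<subseteq> centralizer G (K <#> center G)"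
  proof
    fix g assume g: "g \<in> centralizer G K"
    have gc: "g \<in> carrier G" using g centralizer_sub by auto
    show "g \<in> centralizer G (K <#> center G)" unfolding centralizer_def
    proof (safe)
      show "g \<in> carrier G" by fact
    next
      fix w assume "w \<in> K <#> center G"
      then obtain k z where k: "k \<in> K" and z: "z \<in> center G" and w: "w = k \<otimes> z"
        unfolding set_mult_def by auto
      have kc: "k \<in> carrier G" using k Kc by auto
      have zc: "z \<in> carrier G" using z center_carrier by auto
      have gk: "g \<otimes> k = k \<otimes> g" using g k unfolding centralizer_def by auto
      have "g \<otimes> (k \<otimes> z) = (g \<otimes> k) \<otimes> z" using gc kc zc by (simp add: m_assoc)
      also have "\<dots> = k \<otimes> g \<otimes> z" using gk by simp
      finally have "g \<otimes> (k \<otimes> z) = k \<otimes> g \<otimes> z" .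
      also have "\<dots> = k \<otimes> (z \<otimes> g)" using center_comm[OF z gc] gc kc zc by (simp add: m_assoc)
      also have "\<dots> = (k \<otimes> z) \<otimes> g" using gc kc zc by (simp add: m_assoc)
      finally show "g \<otimes> w = w \<otimes> g" using w by simp
    qed
  qed
qed

lemma card_set_mult:
  assumes A: "subgroup A G" and B: "subgroup B G" and fin: "finite (carrier G)"
  shows "card (A <#> B) * card (A \<inter> B) = card A * card B"
proof -
  define F where "F w = {p \<in> A \<times> B. fst p \<otimes> snd p = w}" for w
  have Ac: "A \<subseteq> carrier G" and Bc: "B \<subseteq> carrier G" using A B subgroup.subset by auto
  have finA: "finite A" and finB: "finite B" using Ac Bc fin finite_subset by auto
  have finAB: "finite (A <#> B)" using setmult_subset_G[OF Ac Bc] fin finite_subset by auto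
  have U: "A \<times> B = (\<Union>w\<in>A <#> B. F w)" unfolding F_def set_mult_def by (auto; blast)
  have each: "card (F w) = card (A \<inter> B)" if w: "w \<in> A <#> B" for w
  proof -
    obtain a0 b0 where a0: "a0 \<in> A" and b0: "b0 \<in> B" and w0: "w = a0 \<otimes> b0"
      using w unfolding set_mult_def by auto
    have a0c: "a0 \<in> carrier G" and b0c: "b0 \<in> carrier G" using a0 b0 Ac Bc by auto
    have "bij_betw (\<lambda>t. (a0 \<otimes> t, inv t \<otimes> b0)) (A \<inter> B) (F w)"
    proof (rule bij_betw_byWitness[where f' = "\<lambda>p. inv a0 \<otimes> fst p"])
      show "\<forall>t\<in>A \<inter> B. inv a0 \<otimes> fst (a0 \<otimes> t, inv t \<otimes> b0) = t"
        using a0c Ac by (auto simp: m_assoc[symmetric])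
      show "\<forall>p\<in>F w. (a0 \<otimes> (inv a0 \<otimes> fst p), inv (inv a0 \<otimes> fst p) \<otimes> b0) = p"
      proof
        fix p assume p: "p \<in> F w"
        obtain a b where pab: "p = (a, b)" by (cases p)
        have a: "a \<in> A" and b: "b \<in> B" and ab: "a \<otimes> b = a0 \<otimes> b0"
          using p w0 unfolding F_def pab by auto
        have ac: "a \<in> carrier G" and bc: "b \<in> carrier G" using a b Ac Bc by auto
        have 1: "a0 \<otimes> (inv a0 \<otimes> a) = a" using a0c ac by (simp add: m_assoc[symmetric])
        have "inv (inv a0 \<otimes> a) \<otimes> b0 = inv a \<otimes> (a0 \<otimes> b0)"
          using a0c ac b0c by (simp add: inv_mult_group m_assoc)
        also have "\<dots> = b" using ab[symmetric] ac bc by (simp add: cancel2)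
        finally show "(a0 \<otimes> (inv a0 \<otimes> fst p), inv (inv a0 \<otimes> fst p) \<otimes> b0) = p"
          using 1 pab by simp
      qed
      show "(\<lambda>t. (a0 \<otimes> t, inv t \<otimes> b0)) ` (A \<inter> B) \<subseteq> F w"
      proof
        fix p assume "p \<in> (\<lambda>t. (a0 \<otimes> t, inv t \<otimes> b0)) ` (A \<inter> B)"
        then obtain t where t: "t \<in> A" "t \<in> B" and p: "p = (a0 \<otimes> t, inv t \<otimes> b0)" by auto
        have tc: "t \<in> carrier G" using t Ac by auto
        have "a0 \<otimes> t \<otimes> (inv t \<otimes> b0) = a0 \<otimes> b0"
          using a0c b0c tc by (simp add: m_assoc cancel1)
        moreover have "a0 \<otimes> t \<in> A" using subgroup.m_closed[OF A a0 t(1)] .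
        moreover have "inv t \<otimes> b0 \<in> B" using subgroup.m_closed[OF B subgroup.m_inv_closed[OF B t(2)] b0] .
        ultimately show "p \<in> F w" unfolding F_def p w0 by auto
      qed
      show "(\<lambda>p. inv a0 \<otimes> fst p) ` F w \<subseteq> A \<inter> B"
      proof
        fix x assume "x \<in> (\<lambda>p. inv a0 \<otimes> fst p) ` F w"
        then obtain a b where a: "a \<in> A" and b: "b \<in> B" and ab: "a \<otimes> b = a0 \<otimes> b0"
          and x: "x = inv a0 \<otimes> a" unfolding F_def w0 by auto
        have ac: "a \<in> carrier G" and bc: "b \<in> carrier G" using a b Ac Bc by auto
        have "x \<in> A" using x subgroup.m_closed[OF A subgroup.m_inv_closed[OF A a0] a] by simp
        moreover have "x = b0 \<otimes> inv b"
        proof -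
          have "inv a0 \<otimes> a = inv a0 \<otimes> (a \<otimes> b) \<otimes> inv b"
            using ac bc a0c by (simp add: m_assoc)
          also have "\<dots> = b0 \<otimes> inv b" using ab a0c b0c bc by (simp add: m_assoc[symmetric])
          finally show ?thesis using x by simp
        qed
        then have "x \<in> B" using subgroup.m_closed[OF B b0 subgroup.m_inv_closed[OF B b]] by simp
        ultimately show "x \<in> A \<inter> B" by simp
      qed
    qed
    then show ?thesis by (simp add: bij_betw_same_card)
  qed
  have "card A * card B = card (A \<times> B)" by (simp add: card_cartesian_product)
  also have "\<dots> = (\<Sum>w\<in>A <#> B. card (F w))"
    unfolding U
  proof (rule card_UN_disjoint)
    show "finite (A <#> B)" by fact
    show "\<forall>i\<in>A <#> B. finite (F i)" using finA finB unfolding F_def by auto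
    show "\<forall>i\<in>A <#> B. \<forall>j\<in>A <#> B. i \<noteq> j \<longrightarrow> F i \<inter> F j = {}" unfolding F_def by auto
  qed
  also have "\<dots> = card (A <#> B) * card (A \<inter> B)" using each by simp
  finally show ?thesis by simp
qed

lemma finite_subgroups: "finite (carrier G) \<Longrightarrow> finite {K. subgroup K G}"
  by (rule finite_subset[of _ "Pow (carrier G)"]) (auto dest: subgroup.subset)

lemma cd_max_ge: "finite (carrier G) \<Longrightarrow> subgroup K G \<Longrightarrow> cd_measure G K \<le> cd_max G"
  unfolding cd_max_def by (rule Max_ge) (auto simp: finite_subgroups)

lemma cd_max_attained: "finite (carrier G) \<Longrightarrow> \<exists>K. subgroup K G \<and> cd_measure G K = cd_max G"
proof -
  assume fin: "finite (carrier G)"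
  have "cd_max G \<in> cd_measure G ` {K. subgroup K G}"
    unfolding cd_max_def by (rule Max_in) (auto simp: finite_subgroups fin intro: subgroup_self)
  then show ?thesis by auto
qed

lemma cd_le_center:
  assumes fin: "finite (carrier G)" and K: "subgroup K G"
  shows "cd_measure G K \<le> cd_measure G (K <#> center G)"
    and "cd_measure G K = cd_measure G (K <#> center G) \<Longrightarrow> center G \<subseteq> K"
proof -
  have Kc: "K \<subseteq> carrier G" using K subgroup.subset by auto
  have C: "centralizer G (K <#> center G) = centralizer G K" by (rule centralizer_set_mult_center[OF Kc])
  have sub: "K \<subseteq> K <#> center G" by (rule set_mult_one_right[OF Kc subgroup.one_closed[OF center_subgroup]])
  have finKZ: "finite (K <#> center G)"
    using subgroup.subset[OF set_mult_center_subgroup[OF K]] fin finite_subset by auto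
  have le: "card K \<le> card (K <#> center G)" by (rule card_mono[OF finKZ sub])
  have pos: "card (centralizer G K) > 0"
    using one_centralizer[OF Kc] centralizer_sub fin finite_subset card_gt_0_iff by blast
  show "cd_measure G K \<le> cd_measure G (K <#> center G)"
    unfolding cd_measure_def C using le by simp
  assume eq: "cd_measure G K = cd_measure G (K <#> center G)"
  then have "card K = card (K <#> center G)" unfolding cd_measure_def C using pos by simp
  then have "K = K <#> center G" using card_subset_eq[OF finKZ sub] by simp
  moreover have "center G \<subseteq> K <#> center G"
    unfolding set_mult_def using subgroup.one_closed[OF K] center_carrier by force
  ultimately show "center G \<subseteq> K" by simp
qed

lemma CD_center:
  assumes fin: "finite (carrier G)" and K: "K \<in> CD G" shows "center G \<subseteq> K"
proof -
  have Ks: "subgroup K G" and Km: "cd_measure G K = cd_max G" using K unfolding CD_def by auto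
  have "cd_measure G (K <#> center G) \<le> cd_max G"
    by (rule cd_max_ge[OF fin set_mult_center_subgroup[OF Ks]])
  then have "cd_measure G K = cd_measure G (K <#> center G)"
    using cd_le_center(1)[OF fin Ks] Km by simp
  then show ?thesis by (rule cd_le_center(2)[OF fin Ks])
qed

lemma dedekind:
  assumes K: "subgroup K G" and Z: "subgroup Z G" and ZK: "Z \<subseteq> K" and KHZ: "K \<subseteq> H <#> Z"
    and Hc: "H \<subseteq> carrier G"
  shows "K = (K \<inter> H) <#> Z"
proof
  show "(K \<inter> H) <#> Z \<subseteq> K"
    unfolding set_mult_def using ZK subgroup.m_closed[OF K] by blast
next
  show "K \<subseteq> (K \<inter> H) <#> Z"
  proof
    fix k assume k: "k \<in> K"
    then obtain h z where h: "h \<in> H" and z: "z \<in> Z" and kz: "k = h \<otimes> z"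
      using KHZ unfolding set_mult_def by auto
    have hc: "h \<in> carrier G" using h Hc by auto
    have zc: "z \<in> carrier G" using z subgroup.mem_carrier[OF Z] by auto
    have "h = k \<otimes> inv z" using kz hc zc by (simp add: m_assoc)
    then have "h \<in> K" using subgroup.m_closed[OF K k subgroup.m_inv_closed[OF K]] z ZK by auto
    then show "k \<in> (K \<inter> H) <#> Z" unfolding set_mult_def using h z kz by blast
  qed
qed

lemma cut:
  assumes S: "subgroup S G" and H: "subgroup H G" and XH: "S \<subseteq> H" and Z: "subgroup Z G"
    and ZH: "Z \<inter> H \<subseteq> S"
  shows "(S <#> Z) \<inter> H = S"
proof
  show "S \<subseteq> (S <#> Z) \<inter> H"
    using set_mult_one_right[OF subgroup.subset[OF S] subgroup.one_closed[OF Z]] XH by auto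
next
  show "(S <#> Z) \<inter> H \<subseteq> S"
  proof
    fix w assume w: "w \<in> (S <#> Z) \<inter> H"
    then obtain x z where x: "x \<in> S" and z: "z \<in> Z" and wz: "w = x \<otimes> z"
      unfolding set_mult_def by auto
    have xc: "x \<in> carrier G" using x subgroup.mem_carrier[OF S] by auto
    have zc: "z \<in> carrier G" using z subgroup.mem_carrier[OF Z] by auto
    have "z = inv x \<otimes> w" using wz xc zc by (simp add: cancel2)
    then have "z \<in> H" using subgroup.m_closed[OF H subgroup.m_inv_closed[OF H] ] x XH w by auto
    then have "z \<in> S" using z ZH by auto
    then show "w \<in> S" using wz subgroup.m_closed[OF S x] by simp
  qed
qed

end

theorem proposition3p5:
  fixes G :: "('a, 'b) monoid_scheme" and H :: "'a set"
  assumes "group G"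
    and "finite (carrier G)"
    and "subgroup H G"
    and "carrier G = H <#>\<^bsub>G\<^esub> center G"
  shows "(\<exists>f. subgroup_lattice_iso G (G\<lparr>carrier := H\<rparr>) (CD G) (CD (G\<lparr>carrier := H\<rparr>)) f)
         \<and> CD G = (\<lambda>K. K <#>\<^bsub>G\<^esub> center G) ` CD (G\<lparr>carrier := H\<rparr>)"
proof -
  interpret group G by fact
  note fin = assms(2) and Hs = assms(3) and GHZ = assms(4)
  define HH where "HH = G\<lparr>carrier := H\<rparr>"
  define Z where "Z = center G"
  have gHH: "group HH" unfolding HH_def by (rule subgroup.subgroup_is_group[OF Hs assms(1)])
  have Hc: "H \<subseteq> carrier G" using Hs subgroup.subset by auto
  have finH: "finite H" using Hc fin finite_subset by auto
  have finHH: "finite (carrier HH)" unfolding HH_def using finH by simp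
  have Zs: "subgroup Z G" unfolding Z_def by (rule center_subgroup)
  have Zc: "Z \<subseteq> carrier G" using Zs subgroup.subset by auto
  have subHH: "subgroup A1 HH \<longleftrightarrow> subgroup A1 G \<and> A1 \<subseteq> H" for A1
  proof
    assume "subgroup A1 HH"
    then show "subgroup A1 G \<and> A1 \<subseteq> H" unfolding HH_def
      using incl_subgroup[OF Hs] subgroup.subset by fastforce
  next
    assume "subgroup A1 G \<and> A1 \<subseteq> H"
    then show "subgroup A1 HH" unfolding HH_def using subgroup_incl[OF _ Hs] by auto
  qed
  have cHH: "centralizer HH A1 = centralizer G A1 \<inter> H" for A1
    unfolding HH_def centralizer_def using Hc by auto
  have CGH: "centralizer G H = Z"
  proof -
    have "centralizer G H = centralizer G (H <#>\<^bsub>G\<^esub> Z)"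
      unfolding Z_def by (rule centralizer_set_mult_center[OF Hc, symmetric])
    also have "\<dots> = Z" unfolding Z_def using GHZ by (simp add: center_def)
    finally show ?thesis .
  qed
  have ZH: "center HH = Z \<inter> H"
    unfolding center_def using cHH[of H] CGH by (simp add: HH_def)
  have CXZ: "centralizer G A1 = (centralizer HH A1) <#>\<^bsub>G\<^esub> Z" if "A1 \<subseteq> H" for A1
  proof -
    have A1c: "A1 \<subseteq> carrier G" using that Hc by auto
    have "centralizer G A1 = (centralizer G A1 \<inter> H) <#>\<^bsub>G\<^esub> Z"
    proof (rule dedekind[OF centralizer_subgroup[OF A1c] Zs _ _ Hc])
      show "Z \<subseteq> centralizer G A1" unfolding Z_def by (rule center_sub_centralizer[OF A1c])
      show "centralizer G A1 \<subseteq> H <#>\<^bsub>G\<^esub> Z" using centralizer_sub GHZ Z_def by auto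
    qed
    then show ?thesis using cHH by simp
  qed
  have zpos: "card Z > 0" using subgroup.one_closed[OF Zs] Zc fin finite_subset card_gt_0_iff by blast
  define zh where "zh = card (Z \<inter> H)"
  have zhpos: "zh > 0" unfolding zh_def
    using subgroup.one_closed[OF Zs] subgroup.one_closed[OF Hs] finH card_gt_0_iff by blast
  have formula: "cd_measure G (A1 <#>\<^bsub>G\<^esub> Z) * zh^2 = cd_measure HH A1 * (card Z)^2"
    if A1s: "subgroup A1 G" and A1H: "A1 \<subseteq> H" and ZA1: "Z \<inter> H \<subseteq> A1" for A1
  proof -
    have A1c: "A1 \<subseteq> carrier G" using A1H Hc by auto
    define C where "C = centralizer HH A1"
    have Cs: "subgroup C G" unfolding C_def cHH using centralizer_subgroup[OF A1c] Hs
      by (rule subgroups_Inter_pair)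
    have e1: "card (A1 <#>\<^bsub>G\<^esub> Z) * zh = card A1 * card Z"
    proof -
      have "A1 \<inter> Z = Z \<inter> H" using ZA1 A1H by auto
      then show ?thesis using card_set_mult[OF A1s Zs fin] zh_def by simp
    qed
    have e2: "card (C <#>\<^bsub>G\<^esub> Z) * zh = card C * card Z"
    proof -
      have "Z \<subseteq> centralizer G A1" unfolding Z_def by (rule center_sub_centralizer[OF A1c])
      then have "C \<inter> Z = Z \<inter> H" unfolding C_def cHH by auto
      then show ?thesis using card_set_mult[OF Cs Zs fin] zh_def by simp
    qed
    have "cd_measure G (A1 <#>\<^bsub>G\<^esub> Z) = card (A1 <#>\<^bsub>G\<^esub> Z) * card (C <#>\<^bsub>G\<^esub> Z)"
      unfolding cd_measure_def Z_def centralizer_set_mult_center[OF A1c]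
      using CXZ[OF A1H] by (simp add: C_def Z_def)
    then have "cd_measure G (A1 <#>\<^bsub>G\<^esub> Z) * zh^2 = (card (A1 <#>\<^bsub>G\<^esub> Z) * zh) * (card (C <#>\<^bsub>G\<^esub> Z) * zh)"
      by (simp add: power2_eq_square)
    also have "\<dots> = cd_measure HH A1 * (card Z)^2" using e1 e2
      by (simp add: cd_measure_def C_def power2_eq_square)
    finally show ?thesis .
  qed

  have M1: "cd_measure G K * zh^2 \<le> cd_max HH * (card Z)^2" if Ks: "subgroup K G" for K
  proof -
    define KZ where "KZ = K <#>\<^bsub>G\<^esub> Z"
    have KZs: "subgroup KZ G" unfolding KZ_def Z_def by (rule set_mult_center_subgroup[OF Ks])
    have le: "cd_measure G K \<le> cd_measure G KZ" unfolding KZ_def Z_def by (rule cd_le_center(1)[OF fin Ks])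
    have ZKZ: "Z \<subseteq> KZ" unfolding KZ_def set_mult_def using subgroup.one_closed[OF Ks] Zc by force
    have KZeq: "KZ = (KZ \<inter> H) <#>\<^bsub>G\<^esub> Z"
      by (rule dedekind[OF KZs Zs ZKZ _ Hc]) (use subgroup.subset[OF KZs] GHZ Z_def in auto)
    have Xs: "subgroup (KZ \<inter> H) G" using KZs Hs by (rule subgroups_Inter_pair)
    have ZX: "Z \<inter> H \<subseteq> KZ \<inter> H" using ZKZ by auto
    have "cd_measure G KZ * zh^2 = cd_measure HH (KZ \<inter> H) * (card Z)^2"
      using formula[OF Xs Int_lower2 ZX] KZeq[symmetric] by simp
    also have "\<dots> \<le> cd_max HH * (card Z)^2"
      using group.cd_max_ge[OF gHH finHH] subHH Xs by simp
    finally have "cd_measure G KZ * zh^2 \<le> cd_max HH * (card Z)^2" .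
    moreover have "cd_measure G K * zh^2 \<le> cd_measure G KZ * zh^2" using le by (rule mult_le_mono1)
    ultimately show ?thesis by (rule le_trans[rotated])
  qed
  have M2: "subgroup A1 G \<and> A1 \<subseteq> H \<and> Z \<inter> H \<subseteq> A1 \<and>
      cd_measure G (A1 <#>\<^bsub>G\<^esub> Z) * zh^2 = cd_max HH * (card Z)^2" if A1: "A1 \<in> CD HH" for A1
  proof -
    have "subgroup A1 HH" and m: "cd_measure HH A1 = cd_max HH" using A1 unfolding CD_def by auto
    then have s: "subgroup A1 G" "A1 \<subseteq> H" using subHH by auto
    have "Z \<inter> H \<subseteq> A1" using group.CD_center[OF gHH finHH A1] ZH by simp
    then show ?thesis using s formula[OF s] m by simp
  qed
  obtain K0 where K0: "subgroup K0 G" "cd_measure G K0 = cd_max G" using cd_max_attained[OF fin] by auto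
  obtain X0 where X0: "subgroup X0 HH" "cd_measure HH X0 = cd_max HH"
    using group.cd_max_attained[OF gHH finHH] by auto
  have X0CD: "X0 \<in> CD HH" using X0 unfolding CD_def by auto
  have M3: "cd_max G * zh^2 = cd_max HH * (card Z)^2"
  proof (rule antisym)
    show "cd_max G * zh^2 \<le> cd_max HH * (card Z)^2" using M1[OF K0(1)] K0(2) by simp
    have "cd_measure G (X0 <#>\<^bsub>G\<^esub> Z) \<le> cd_max G"
      using cd_max_ge[OF fin set_mult_center_subgroup] M2[OF X0CD] unfolding Z_def by blast
    then show "cd_max HH * (card Z)^2 \<le> cd_max G * zh^2"
      using M2[OF X0CD] mult_le_mono1[OF \<open>cd_measure G (X0 <#>\<^bsub>G\<^esub> Z) \<le> cd_max G\<close>, of "zh^2"] by simp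
  qed
  have M4: "Z \<subseteq> K \<and> K \<inter> H \<in> CD HH \<and> (K \<inter> H) <#>\<^bsub>G\<^esub> Z = K" if K: "K \<in> CD G" for K
  proof -
    have Ks: "subgroup K G" and Km: "cd_measure G K = cd_max G" using K unfolding CD_def by auto
    have ZK: "Z \<subseteq> K" unfolding Z_def by (rule CD_center[OF fin K])
    have Keq: "K = (K \<inter> H) <#>\<^bsub>G\<^esub> Z"
      by (rule dedekind[OF Ks Zs ZK _ Hc]) (use subgroup.subset[OF Ks] GHZ Z_def in auto)
    have Xs: "subgroup (K \<inter> H) G" using Ks Hs by (rule subgroups_Inter_pair)
    have "cd_measure HH (K \<inter> H) * (card Z)^2 = cd_max HH * (card Z)^2"
    proof -
      have ZX: "Z \<inter> H \<subseteq> K \<inter> H" using ZK by auto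
      show ?thesis using formula[OF Xs Int_lower2 ZX] Keq[symmetric] Km M3 by simp (metis)
    qed
    then have "cd_measure HH (K \<inter> H) = cd_max HH" using zpos by simp
    then have "K \<inter> H \<in> CD HH" unfolding CD_def using subHH Xs by auto
    then show ?thesis using ZK Keq by simp
  qed
  have M5: "A1 <#>\<^bsub>G\<^esub> Z \<in> CD G \<and> (A1 <#>\<^bsub>G\<^esub> Z) \<inter> H = A1" if A1: "A1 \<in> CD HH" for A1
  proof -
    have m2: "subgroup A1 G" "A1 \<subseteq> H" "Z \<inter> H \<subseteq> A1"
      "cd_measure G (A1 <#>\<^bsub>G\<^esub> Z) * zh^2 = cd_max HH * (card Z)^2" using M2[OF A1] by auto
    have "cd_measure G (A1 <#>\<^bsub>G\<^esub> Z) * zh^2 = cd_max G * zh^2" using m2(4) M3 by simp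
    then have "cd_measure G (A1 <#>\<^bsub>G\<^esub> Z) = cd_max G" using zhpos by simp
    moreover have "subgroup (A1 <#>\<^bsub>G\<^esub> Z) G" unfolding Z_def by (rule set_mult_center_subgroup[OF m2(1)])
    ultimately have "A1 <#>\<^bsub>G\<^esub> Z \<in> CD G" unfolding CD_def by auto
    moreover have "(A1 <#>\<^bsub>G\<^esub> Z) \<inter> H = A1" by (rule cut[OF m2(1) Hs m2(2) Zs m2(3)])
    ultimately show ?thesis by simp
  qed
  have img: "CD G = (\<lambda>K. K <#>\<^bsub>G\<^esub> Z) ` CD HH"
  proof
    show "CD G \<subseteq> (\<lambda>K. K <#>\<^bsub>G\<^esub> Z) ` CD HH"
    proof
      fix K assume "K \<in> CD G"
      then have "K \<inter> H \<in> CD HH" "(K \<inter> H) <#>\<^bsub>G\<^esub> Z = K" using M4 by auto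
      then show "K \<in> (\<lambda>K. K <#>\<^bsub>G\<^esub> Z) ` CD HH" by (intro image_eqI[where x="K \<inter> H"]) simp_all
    qed
    show "(\<lambda>K. K <#>\<^bsub>G\<^esub> Z) ` CD HH \<subseteq> CD G" using M5 by auto
  qed
  have iso: "subgroup_lattice_iso G HH (CD G) (CD HH) (\<lambda>K. K \<inter> H)"
    unfolding subgroup_lattice_iso_def
  proof (intro conjI ballI)
    show "bij_betw (\<lambda>K. K \<inter> H) (CD G) (CD HH)"
    proof (rule bij_betw_byWitness[where f' = "\<lambda>K. K <#>\<^bsub>G\<^esub> Z"])
      show "\<forall>a\<in>CD G. a \<inter> H <#>\<^bsub>G\<^esub> Z = a" using M4 by blast
      show "\<forall>a'\<in>CD HH. (a' <#>\<^bsub>G\<^esub> Z) \<inter> H = a'" using M5 by blast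
      show "(\<lambda>K. K \<inter> H) ` CD G \<subseteq> CD HH" using M4 by blast
      show "(\<lambda>K. K <#>\<^bsub>G\<^esub> Z) ` CD HH \<subseteq> CD G" using M5 by blast
    qed
  next
    fix U V assume "U \<in> CD G" "V \<in> CD G"
    show "U \<inter> V \<inter> H = U \<inter> H \<inter> (V \<inter> H)" by auto
  next
    fix U V assume U: "U \<in> CD G" and V: "V \<in> CD G"
    define X1 where "X1 = U \<inter> H"
    define Y1 where "Y1 = V \<inter> H"
    have U': "Z \<subseteq> U" "X1 \<in> CD HH" "X1 <#>\<^bsub>G\<^esub> Z = U" using M4[OF U] X1_def by auto
    have V': "Z \<subseteq> V" "Y1 \<in> CD HH" "Y1 <#>\<^bsub>G\<^esub> Z = V" using M4[OF V] Y1_def by auto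
    have XYH: "X1 \<union> Y1 \<subseteq> H" unfolding X1_def Y1_def by auto
    define S where "S = generate G (X1 \<union> Y1)"
    have gen: "generate HH (X1 \<union> Y1) = S"
      unfolding HH_def S_def by (rule generate_consistent[OF XYH Hs])
    have Ss: "subgroup S G" unfolding S_def by (rule generate_is_subgroup) (use XYH Hc in auto)
    have SH: "S \<subseteq> H" unfolding S_def by (rule generate_subgroup_incl[OF XYH Hs])
    have XS: "X1 \<union> Y1 \<subseteq> S" unfolding S_def by (auto intro: generate.incl)
    have ZHS: "Z \<inter> H \<subseteq> S" using U'(1) XS X1_def by auto
    have SW: "S \<subseteq> generate G (U \<union> V)" unfolding S_def
      by (rule mono_generate) (auto simp: X1_def Y1_def)
    have WSZ: "generate G (U \<union> V) \<subseteq> S <#>\<^bsub>G\<^esub> Z"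
    proof (rule generate_subgroup_incl)
      show "subgroup (S <#>\<^bsub>G\<^esub> Z) G" unfolding Z_def by (rule set_mult_center_subgroup[OF Ss])
      have "U \<subseteq> S <#>\<^bsub>G\<^esub> Z" using mono_set_mult[of X1 S Z Z G] XS U'(3) by auto
      moreover have "V \<subseteq> S <#>\<^bsub>G\<^esub> Z" using mono_set_mult[of Y1 S Z Z G] XS V'(3) by auto
      ultimately show "U \<union> V \<subseteq> S <#>\<^bsub>G\<^esub> Z" by auto
    qed
    have "generate G (U \<union> V) \<inter> H = S"
    proof
      show "generate G (U \<union> V) \<inter> H \<subseteq> S"
        using WSZ cut[OF Ss Hs SH Zs ZHS] by auto
      show "S \<subseteq> generate G (U \<union> V) \<inter> H" using SW SH by auto
    qed
    then show "generate G (U \<union> V) \<inter> H = generate HH (U \<inter> H \<union> V \<inter> H)"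
      using gen X1_def Y1_def by simp
  qed
  show ?thesis using iso img unfolding HH_def Z_def by blast
qed

end
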